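(* Let $I=(m_1,\dots,m_k,T_1,\dots,T_n)$ be an instance of the VSPA problem with $0<m_1\le m_2\le\dots\le m_k$, $n=\sum_r m_r$, $T_i\in\{H,L\}$ for all $i$ where $0\le H<L$, and $T_1=L$, and let $g$ be a nondecreasing function. Then for every valid decision sequence $\mathbf{x}=(x_1,\dots,x_n)$ with $x_1>1$ there exists a valid decision sequence $\mathbf{x}^*=(1,x^*_2,\dots,x^*_n)$ with $\mathrm{COST}_I(\mathbf{x}^* )\le\mathrm{COST}_I(\mathbf{x})$.
   Context: Variable-Sized Positional Allocation (VSPA) problem: an instance consists of capacities $m_1,\dots,m_k$ (positive integers) and intrinsic task costs $T_1,\dots,T_n\ge 0$ with $n=\sum_r m_r$, together with a nondecreasing function $g:\mathbb{N}\to\mathbb{R}_{\ge0}$ (in the original problem $g(q)=f(m+1-q)$ for a nonincreasing positional function $f$). A decision sequence $\mathbf{x}\in[k]^n$ assigns task $t$ to agent $x_t$; it is valid if each agent $r$ receives exactly $m_r$ tasks. When task $t$ is assigned, agent $x_t$ has remaining capacity $q_t=m_{x_t}-|\{s<t: x_s=x_t\}|$, and the assignment costs $g(q_t)\cdot T_t$. The total cost is $\mathrm{COST}_I(\mathbf{x})=\sum_{t=1}^n g(q_t)\,T_t$. *)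

theory Defs
  imports Complex_Main
begin

text \<open>A decision sequence is x :: nat => nat, where x t is the
agent receiving task t (only the values on 1..n matter).\<close>

definition valid_seq :: "nat \<Rightarrow> (nat \<Rightarrow> nat) \<Rightarrow> nat \<Rightarrow> (nat \<Rightarrow> nat) \<Rightarrow> bool" where
  "valid_seq k m n x \<longleftrightarrow>
     (\<forall>t\<in>{1..n}. x t \<in> {1..k}) \<and>
     (\<forall>r\<in>{1..k}. card {t\<in>{1..n}. x t = r} = m r)"

definition rem_cap :: "(nat \<Rightarrow> nat) \<Rightarrow> (nat \<Rightarrow> nat) \<Rightarrow> nat \<Rightarrow> nat" where
  "rem_cap m x t = m (x t) - card {s\<in>{1..<t}. x s = x t}"

definition vspa_cost :: "(nat \<Rightarrow> real) \<Rightarrow> (nat \<Rightarrow> nat) \<Rightarrow> nat \<Rightarrow> (nat \<Rightarrow> real) \<Rightarrow> (nat \<Rightarrow> nat) \<Rightarrow> real" where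
  "vspa_cost g m n T x = (\<Sum>t=1..n. g (rem_cap m x t) * T t)"

end

theory Submission
  imports Defs
begin


definition cnt :: "nat \<Rightarrow> (nat \<Rightarrow> nat) \<Rightarrow> nat \<Rightarrow> nat \<Rightarrow> nat" where
  "cnt n x r t = card {s\<in>{t..<Suc n}. x s = r}"

lemma card_split:
  fixes t u p :: nat
  assumes "t \<le> u" "u \<le> p"
  shows "card {s\<in>{t..<p}. P s} = card {s\<in>{t..<u}. P s} + card {s\<in>{u..<p}. P s}"
proof -
  have "{s\<in>{t..<p}. P s} = {s\<in>{t..<u}. P s} \<union> {s\<in>{u..<p}. P s}"
    using assms by auto
  moreover have "{s\<in>{t..<u}. P s} \<inter> {s\<in>{u..<p}. P s} = {}" by auto
  ultimately show ?thesis by (simp add: card_Un_disjoint)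
qed

lemma cnt_split:
  assumes "t \<le> u" "u \<le> Suc n"
  shows "cnt n x r t = card {s\<in>{t..<u}. x s = r} + cnt n x r u"
  unfolding cnt_def using card_split[OF assms] .

lemma cnt_step:
  assumes "t \<le> n"
  shows "cnt n x r t = (if x t = r then 1 else 0) + cnt n x r (Suc t)"
proof -
  have "cnt n x r t = card {s\<in>{t..<Suc t}. x s = r} + cnt n x r (Suc t)"
    using assms by (intro cnt_split) auto
  moreover have "{s\<in>{t..<Suc t}. x s = r} = (if x t = r then {t} else {})" by auto
  ultimately show ?thesis by simp
qed

lemma cnt_cong:
  assumes "\<And>s. t \<le> s \<Longrightarrow> s \<le> n \<Longrightarrow> x s = y s"
  shows "cnt n x r t = cnt n y r t"
proof -
  have "{s\<in>{t..<Suc n}. x s = r} = {s\<in>{t..<Suc n}. y s = r}" using assms by auto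
  thus ?thesis by (simp add: cnt_def)
qed

lemma cnt_none:
  assumes "\<And>s. t \<le> s \<Longrightarrow> s < u \<Longrightarrow> x s \<noteq> r" "t \<le> u" "u \<le> Suc n"
  shows "cnt n x r t = cnt n x r u"
proof -
  have "{s\<in>{t..<u}. x s = r} = {}" using assms(1) by auto
  thus ?thesis using cnt_split[OF assms(2,3)] by simp
qed

lemma valid_cnt:
  assumes "valid_seq k m n x" "r \<in> {1..k}"
  shows "cnt n x r 1 = m r"
  using assms unfolding valid_seq_def cnt_def by (simp add: atLeastLessThanSuc_atLeastAtMost)

lemma rem_cap_cnt:
  assumes "valid_seq k m n x" "t \<in> {1..n}"
  shows "rem_cap m x t = cnt n x (x t) t"
proof -
  have xt: "x t \<in> {1..k}" using assms unfolding valid_seq_def by auto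
  have "m (x t) = cnt n x (x t) 1" using valid_cnt[OF assms(1) xt] by simp
  also have "\<dots> = card {s\<in>{1..<t}. x s = x t} + cnt n x (x t) t"
    using assms(2) by (intro cnt_split) auto
  finally show ?thesis unfolding rem_cap_def by simp
qed

lemma cost_cnt:
  assumes "valid_seq k m n x"
  shows "vspa_cost g m n T x = (\<Sum>t\<in>{1..<Suc n}. g (cnt n x (x t) t) * T t)"
  unfolding vspa_cost_def atLeastLessThanSuc_atLeastAtMost
  using rem_cap_cnt[OF assms] by (intro sum.cong) auto

lemma valid_transfer:
  assumes "valid_seq k m n x" "\<forall>t\<in>{1..n}. y t \<in> {1..k}" "\<And>r. cnt n y r 1 = cnt n x r 1"
  shows "valid_seq k m n y"
  using assms unfolding valid_seq_def cnt_def by (simp add: atLeastLessThanSuc_atLeastAtMost)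


definition sw :: "nat \<Rightarrow> nat \<Rightarrow> nat \<Rightarrow> nat" where
  "sw a b r = (if r = a then b else if r = b then a else r)"

lemma sw_sw[simp]: "sw a b (sw a b r) = r"
  unfolding sw_def by auto

lemma sw_eq_iff: "(sw a b u = r) = (u = sw a b r)"
  unfolding sw_def by auto

lemma swap_lemma:
  assumes valid: "valid_seq k m n x"
    and ab: "a \<in> {1..k}" "b \<in> {1..k}"
    and tau: "1 \<le> \<tau>" "\<tau> \<le> Suc n"
    and eq: "cnt n x a \<tau> = cnt n x b \<tau>"
  defines "y \<equiv> (\<lambda>s. if \<tau> \<le> s then sw a b (x s) else x s)"
  shows "valid_seq k m n y" "y 1 = (if \<tau> = 1 then sw a b (x 1) else x 1)"
    "\<And>t. t \<in> {1..n} \<Longrightarrow> cnt n y (y t) t = cnt n x (x t) t"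
proof -
  have csw: "cnt n x (sw a b r) \<tau> = cnt n x r \<tau>" for r
    using eq unfolding sw_def by auto
  have hi: "cnt n y r t = cnt n x (sw a b r) t" if "\<tau> \<le> t" for r t
  proof -
    have "{s\<in>{t..<Suc n}. y s = r} = {s\<in>{t..<Suc n}. x s = sw a b r}"
      using that by (auto simp: y_def sw_eq_iff)
    thus ?thesis by (simp add: cnt_def)
  qed
  have lo: "cnt n y r t = cnt n x r t" if "t \<le> \<tau>" for r t
  proof -
    have "cnt n y r t = card {s\<in>{t..<\<tau>}. y s = r} + cnt n y r \<tau>"
      using that tau by (intro cnt_split) auto
    also have "{s\<in>{t..<\<tau>}. y s = r} = {s\<in>{t..<\<tau>}. x s = r}" by (auto simp: y_def)
    also have "cnt n y r \<tau> = cnt n x r \<tau>" using hi[of \<tau> r] csw by simp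
    also have "card {s\<in>{t..<\<tau>}. x s = r} + cnt n x r \<tau> = cnt n x r t"
      using that tau by (intro cnt_split[symmetric]) auto
    finally show ?thesis .
  qed
  have yk: "\<forall>t\<in>{1..n}. y t \<in> {1..k}"
    using valid ab unfolding valid_seq_def y_def sw_def by auto
  show "valid_seq k m n y"
    using valid_transfer[OF valid yk] lo tau by auto
  show "y 1 = (if \<tau> = 1 then sw a b (x 1) else x 1)" using tau by (auto simp: y_def)
  fix t assume t: "t \<in> {1..n}"
  show "cnt n y (y t) t = cnt n x (x t) t"
  proof (cases "\<tau> \<le> t")
    case True
    then show ?thesis using hi[OF True] by (simp add: y_def)
  next
    case False
    then show ?thesis using lo[of t "y t"] by (simp add: y_def)
  qed
qed


lemma exch_lemma:
  fixes g :: "nat \<Rightarrow> real" and T :: "nat \<Rightarrow> real"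
  assumes valid: "valid_seq k m n x"
    and j: "1 < j" "j \<le> n"
    and xa: "x 1 = a" and xb: "x j = b" and ab: "a \<noteq> b"
    and nob: "\<And>s. 1 \<le> s \<Longrightarrow> s < j \<Longrightarrow> x s \<noteq> b"
    and cond: "cnt n x b 1 \<le> cnt n x a j + 1"
    and TL: "\<forall>t\<in>{1..n}. T t \<le> L" and T1: "T 1 = L"
    and gm: "mono g"
  defines "y \<equiv> x(1 := b, j := a)"
  shows "valid_seq k m n y \<and> y 1 = b \<and> vspa_cost g m n T y \<le> vspa_cost g m n T x"
proof -
  have y_eq: "y s = x s" if "s \<noteq> 1" "s \<noteq> j" for s using that by (simp add: y_def)
  have y1: "y 1 = b" using j by (simp add: y_def)
  have yj: "y j = a" by (simp add: y_def)
  have E2: "cnt n y r t + (if r = b then 1 else 0) = cnt n x r t + (if r = a then 1 else 0)"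
    if "1 < t" "t \<le> j" for r t
  proof -
    have s: "cnt n z r t = card {s\<in>{t..<j}. z s = r} + ((if z j = r then 1 else 0) + cnt n z r (Suc j))" for z
      using cnt_split[of t j n z r] cnt_step[of j n z r] that j by simp
    have c1: "{s\<in>{t..<j}. y s = r} = {s\<in>{t..<j}. x s = r}" using that y_eq by auto
    have c2: "cnt n y r (Suc j) = cnt n x r (Suc j)" using y_eq j by (intro cnt_cong) auto
    show ?thesis using s[of y] s[of x] c1 c2 yj xb ab by auto
  qed
  have E3: "cnt n y r 1 = cnt n x r 1" for r
  proof -
    have "cnt n y r 1 = (if y 1 = r then 1 else 0) + cnt n y r 2"
      "cnt n x r 1 = (if x 1 = r then 1 else 0) + cnt n x r 2"
      using cnt_step[of 1 n _ r] j by (auto simp: numeral_2_eq_2)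
    thus ?thesis using E2[of 2 r] j y1 xa by auto
  qed
  have yk: "\<forall>t\<in>{1..n}. y t \<in> {1..k}"
  proof -
    have "x 1 \<in> {1..k}" "x j \<in> {1..k}" "\<forall>t\<in>{1..n}. x t \<in> {1..k}"
      using valid j unfolding valid_seq_def by auto
    thus ?thesis using xa xb by (auto simp: y_def)
  qed
  have vy: "valid_seq k m n y" using valid_transfer[OF valid yk E3] .
  define F where "F z t = g (cnt n z (z t) t) * T t" for z t
  define \<alpha> where "\<alpha> t = cnt n x a t" for t
  define h where "h t = g (\<alpha> t + 1)" for t
  define B where "B = cnt n x b 1"
  have split: "(\<Sum>t\<in>{1..<Suc n}. F z t) = F z 1 + (\<Sum>t\<in>{2..<j}. F z t) + F z j + (\<Sum>t\<in>{Suc j..<Suc n}. F z t)" for z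
  proof -
    have "(\<Sum>t\<in>{1..<Suc n}. F z t) = (\<Sum>t\<in>{1..<j}. F z t) + (\<Sum>t\<in>{j..<Suc n}. F z t)"
      using j by (intro sum.atLeastLessThan_concat[symmetric]) auto
    also have "(\<Sum>t\<in>{1..<j}. F z t) = F z 1 + (\<Sum>t\<in>{2..<j}. F z t)"
      using j by (subst sum.atLeast_Suc_lessThan) (auto simp: numeral_2_eq_2)
    also have "(\<Sum>t\<in>{j..<Suc n}. F z t) = F z j + (\<Sum>t\<in>{Suc j..<Suc n}. F z t)"
      using j by (subst sum.atLeast_Suc_lessThan) auto
    finally show ?thesis by simp
  qed
  have tail: "(\<Sum>t\<in>{Suc j..<Suc n}. F y t) = (\<Sum>t\<in>{Suc j..<Suc n}. F x t)"
  proof (intro sum.cong refl)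
    fix t assume t: "t \<in> {Suc j..<Suc n}"
    have "cnt n y r t = cnt n x r t" for r using y_eq t j by (intro cnt_cong) auto
    thus "F y t = F x t" using y_eq t j by (simp add: F_def)
  qed
  have Fy1: "F y 1 = g B * L" using E3 y1 T1 by (simp add: F_def B_def)
  have Fx1: "F x 1 = g (\<alpha> 1) * L" using xa T1 by (simp add: F_def \<alpha>_def)
  have Fyj: "F y j = g (\<alpha> j + 1) * T j" using E2[of j a] j yj ab by (simp add: F_def \<alpha>_def)
  have Fxj: "F x j = g B * T j"
  proof -
    have "cnt n x b 1 = cnt n x b j" using nob j by (intro cnt_none) auto
    thus ?thesis using xb by (simp add: F_def B_def)
  qed
  have step: "\<alpha> t = (if x t = a then 1 else 0) + \<alpha> (Suc t)" if "t \<le> n" for t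
    using cnt_step[OF that] by (simp add: \<alpha>_def)
  have mid: "F y t - F x t \<le> L * (h t - h (Suc t))" if t: "t \<in> {2..<j}" for t
  proof -
    have xtb: "x t \<noteq> b" using nob t by auto
    have yt: "y t = x t" using y_eq t by auto
    have c: "cnt n y (x t) t = cnt n x (x t) t + (if x t = a then 1 else 0)"
      using E2[of t "x t"] t xtb by auto
    have Tt: "T t \<le> L" using TL t j by auto
    show ?thesis
    proof (cases "x t = a")
      case True
      have st: "\<alpha> t = 1 + \<alpha> (Suc t)" using step[of t] t j True by auto
      have d: "0 \<le> g (\<alpha> t + 1) - g (\<alpha> t)" using gm by (simp add: mono_def)
      have "F y t - F x t = (g (\<alpha> t + 1) - g (\<alpha> t)) * T t"
        using c yt True by (simp add: F_def \<alpha>_def algebra_simps)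
      also have "\<dots> \<le> (g (\<alpha> t + 1) - g (\<alpha> t)) * L" using mult_left_mono[OF Tt d] .
      also have "\<dots> = L * (h t - h (Suc t))" using st by (simp add: h_def algebra_simps)
      finally show ?thesis .
    next
      case False
      have st: "\<alpha> t = \<alpha> (Suc t)" using step[of t] t j False by auto
      show ?thesis using c yt False st by (simp add: F_def h_def)
    qed
  qed
  have midsum: "(\<Sum>t\<in>{2..<j}. F y t) \<le> (\<Sum>t\<in>{2..<j}. F x t) + L * (h 2 - h j)"
  proof -
    have "(\<Sum>t\<in>{2..<j}. F y t - F x t) \<le> (\<Sum>t\<in>{2..<j}. L * (h t - h (Suc t)))"
      using mid by (rule sum_mono)
    also have "\<dots> = L * (\<Sum>t\<in>{2..<j}. h t - h (Suc t))" by (simp add: sum_distrib_left)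
    also have "(\<Sum>t\<in>{2..<j}. h t - h (Suc t)) = - (\<Sum>t\<in>{2..<j}. h (Suc t) - h t)"
      by (simp add: sum_negf[symmetric])
    also have "(\<Sum>t\<in>{2..<j}. h (Suc t) - h t) = h j - h 2" using j by (intro sum_Suc_diff') auto
    finally show ?thesis by (simp add: sum_subtractf algebra_simps)
  qed
  have h2: "h 2 = g (\<alpha> 1)"
  proof -
    have "\<alpha> 1 = 1 + \<alpha> 2" using step[of 1] j xa by (simp add: numeral_2_eq_2)
    thus ?thesis by (simp add: h_def)
  qed
  have gB: "g B \<le> g (\<alpha> j + 1)" using cond gm by (simp add: mono_def B_def \<alpha>_def)
  have Tj: "T j \<le> L" using TL j by auto
  have prod: "0 \<le> (L - T j) * (g (\<alpha> j + 1) - g B)" using gB Tj by simp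
  have "vspa_cost g m n T y = (\<Sum>t\<in>{1..<Suc n}. F y t)" using cost_cnt[OF vy] by (simp add: F_def)
  also have "\<dots> \<le> (\<Sum>t\<in>{1..<Suc n}. F x t)"
    using split[of y] split[of x] tail Fy1 Fx1 Fyj Fxj midsum h2 prod
    by (simp add: h_def algebra_simps)
  also have "\<dots> = vspa_cost g m n T x" using cost_cnt[OF valid] by (simp add: F_def)
  finally show ?thesis using vy y1 by simp
qed

theorem lemma6:
  fixes k n :: nat and m :: "nat \<Rightarrow> nat" and T :: "nat \<Rightarrow> real"
    and g :: "nat \<Rightarrow> real" and H L :: real and x :: "nat \<Rightarrow> nat"
  assumes k_pos: "k \<ge> 1"
    and m_pos: "\<forall>r\<in>{1..k}. 0 < m r"
    and m_sorted: "\<forall>r\<in>{1..k}. \<forall>r'\<in>{1..k}. r \<le> r' \<longrightarrow> m r \<le> m r'"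
    and n_def: "n = (\<Sum>r=1..k. m r)"
    and HL: "0 \<le> H" "H < L"
    and T_vals: "\<forall>i\<in>{1..n}. T i \<in> {H, L}"
    and T1: "T 1 = L"
    and g_mono: "mono g"
    and g_nonneg: "\<forall>q. 0 \<le> g q"
    and x_valid: "valid_seq k m n x"
    and x1: "x 1 > 1"
  shows "\<exists>xs. valid_seq k m n xs \<and> xs 1 = 1 \<and> vspa_cost g m n T xs \<le> vspa_cost g m n T x"
proof -
  define a where "a = x 1"
  have TL: "\<forall>t\<in>{1..n}. T t \<le> L" using T_vals HL by auto
  have b1: "(1::nat) \<in> {1..k}" using k_pos by auto
  have m1pos: "0 < m 1" using m_pos b1 by auto
  have mb: "cnt n x 1 1 = m 1" using valid_cnt[OF x_valid b1] .
  have "{t\<in>{1..n}. x t = 1} \<noteq> {}"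
    using x_valid m1pos b1 unfolding valid_seq_def by (metis card.empty less_irrefl)
  then obtain j0 where j0: "j0 \<in> {1..n}" "x j0 = 1" by auto
  define j where "j = (LEAST t. t \<in> {1..n} \<and> x t = 1)"
  have jP: "j \<in> {1..n} \<and> x j = 1" unfolding j_def by (rule LeastI[of _ j0]) (use j0 in auto)
  have nob: "x s \<noteq> 1" if "1 \<le> s" "s < j" for s
  proof
    assume "x s = 1"
    hence "j \<le> s" unfolding j_def using that jP by (intro Least_le) auto
    thus False using that by simp
  qed
  have n1: "1 \<le> n" using jP by auto
  have a_ne: "a \<noteq> 1" using x1 a_def by simp
  have j1: "1 < j" using jP a_ne a_def by (metis atLeastAtMost_iff le_neq_implies_less)
  have ak: "a \<in> {1..k}" using x_valid n1 unfolding valid_seq_def a_def by auto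
  have ma: "cnt n x a 1 = m a" using valid_cnt[OF x_valid ak] .
  have mab: "m 1 \<le> m a" using m_sorted b1 ak by auto
  have step: "cnt n x a t = (if x t = a then 1 else 0) + cnt n x a (Suc t)" if "t \<le> n" for t
    using cnt_step[OF that] .
  have cb: "cnt n x 1 t = m 1" if "1 \<le> t" "t \<le> j" for t
    using cnt_none[of 1 t x 1 n] nob that jP mb by auto
  show ?thesis
  proof (cases "cnt n x 1 1 \<le> cnt n x a j + 1")
    case True
    have "valid_seq k m n (x(1 := 1, j := a)) \<and> (x(1 := 1, j := a)) 1 = 1 \<and>
        vspa_cost g m n T (x(1 := 1, j := a)) \<le> vspa_cost g m n T x"
      using exch_lemma[OF x_valid j1 _ a_def[symmetric] _ a_ne _ True TL T1 g_mono] jP nob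
      by auto
    thus ?thesis by blast
  next
    case False
    define S where "S = {t\<in>{1..j}. m 1 \<le> cnt n x a t}"
    have S1: "1 \<in> S" using ma mab j1 by (auto simp: S_def)
    have Sf: "finite S" by (simp add: S_def)
    define \<tau> where "\<tau> = Max S"
    have tS: "\<tau> \<in> S" unfolding \<tau>_def using S1 Sf by (intro Max_in) auto
    have tj: "\<tau> < j"
    proof (rule ccontr)
      assume "\<not> \<tau> < j"
      hence "\<tau> = j" using tS by (auto simp: S_def)
      thus False using tS False mb by (auto simp: S_def)
    qed
    have t1: "1 \<le> \<tau>" using tS by (auto simp: S_def)
    have "Suc \<tau> \<notin> S" using Sf \<tau>_def Max_ge by (metis Suc_n_not_le_n)
    hence lt: "cnt n x a (Suc \<tau>) < m 1" using tj t1 by (auto simp: S_def)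
    have ge: "m 1 \<le> cnt n x a \<tau>" using tS by (auto simp: S_def)
    have xt: "x \<tau> = a" and ct: "cnt n x a \<tau> = m 1"
      using step[of \<tau>] lt ge tj jP by (auto split: if_splits)
    have eq: "cnt n x a \<tau> = cnt n x 1 \<tau>" using ct cb[of \<tau>] t1 tj by simp
    define y where "y = (\<lambda>s. if \<tau> \<le> s then sw a 1 (x s) else x s)"
    have sl: "valid_seq k m n y" "y 1 = (if \<tau> = 1 then sw a 1 (x 1) else x 1)"
      "\<And>t. t \<in> {1..n} \<Longrightarrow> cnt n y (y t) t = cnt n x (x t) t"
      using swap_lemma[OF x_valid ak b1 t1 _ eq] tj jP unfolding y_def by auto
    have cy: "vspa_cost g m n T y = vspa_cost g m n T x"
      using cost_cnt[OF sl(1)] cost_cnt[OF x_valid] sl(3)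
      by (simp add: atLeastLessThanSuc_atLeastAtMost)
    show ?thesis
    proof (cases "\<tau> = 1")
      case True
      have "y 1 = 1" using sl(2) True a_def by (simp add: sw_def)
      thus ?thesis using sl(1) cy by auto
    next
      case False
      have t2: "1 < \<tau>" using False t1 by simp
      have ya: "y 1 = a" using sl(2) False a_def by simp
      have yb: "y \<tau> = 1" using xt by (simp add: y_def sw_def)
      have nob': "\<And>s. 1 \<le> s \<Longrightarrow> s < \<tau> \<Longrightarrow> y s \<noteq> 1" using nob tj by (simp add: y_def)
      have c1: "cnt n y 1 1 = cnt n x 1 1"
        using swap_lemma(1)[OF x_valid ak b1 t1 _ eq] valid_cnt b1 x_valid tj jP
        unfolding y_def by (metis le_SucI less_or_eq_imp_le order.strict_trans2 atLeastAtMost_iff)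
      have c2: "cnt n y a \<tau> = cnt n x 1 \<tau>"
      proof -
        have "{s\<in>{\<tau>..<Suc n}. y s = a} = {s\<in>{\<tau>..<Suc n}. x s = 1}"
          using a_ne by (auto simp: y_def sw_def)
        thus ?thesis by (simp add: cnt_def)
      qed
      have cond: "cnt n y 1 1 \<le> cnt n y a \<tau> + 1" using c1 c2 eq ct mb by simp
      have tn: "\<tau> \<le> n" using tj jP by auto
      have "valid_seq k m n (y(1 := 1, \<tau> := a)) \<and> (y(1 := 1, \<tau> := a)) 1 = 1 \<and>
          vspa_cost g m n T (y(1 := 1, \<tau> := a)) \<le> vspa_cost g m n T y"
        by (rule exch_lemma[OF sl(1) t2 tn ya yb a_ne nob' cond TL T1 g_mono])
      thus ?thesis using cy by (metis order.trans order.refl)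
    qed
  qed
qed
end
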